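(* In the setting described in the context, if $\alpha'(0)=0$, then $\gamma$ is a circle centered at the origin.
   Context: Setting: $\mathbb{R}^2$ in polar coordinates $(r,\theta)$ with Riemannian metric $ds^2=dr^2+h(r)^2d\theta^2$ ($h$ smooth, $h>0$ on $(0,\infty)$) and smooth positive radial density $f(r)=e^{\psi(r)}$; area and length are weighted by $f$. Let $A$ be an isoperimetric region (it minimizes weighted length of boundary among regions of the same weighted area) which is spherically symmetrized: for each $r>0$, $A\cap\{|x|=r\}$ is empty, the whole circle, or a closed arc of that circle symmetric about the ray $\theta=0$. Let $\gamma:[-\beta,\beta]\to\mathbb{R}^2$ be a smooth, counterclockwise, arclength (with respect to $ds$) parametrization of the component of $\partial A$ farthest from the origin, such that $\gamma(0)$ and $\gamma(\beta)=\gamma(-\beta)$ lie on the $x$-axis, $\gamma$ is symmetric about the $x$-axis, lies above the $x$-axis on $(0,\beta)$ and below it on $(-\beta,0)$, and $\gamma(0)$ is a point of $\gamma$ farthest from the origin. Write $\gamma(t)=(r(t),\theta(t))$. Let $\alpha(t)$ be the counterclockwise angle, measured in $ds$, from the unit radial vector $\hat r(t)$ at $\gamma(t)$ to $\gamma'(t)$, chosen continuously in $t$ with $\alpha(0)\in[0,2\pi)$. The generalized curvature $\kappa_f=\kappa+\partial\psi/\partial\nu$ ($\kappa$ the inward geodesic curvature, $\nu$ the outward unit normal) is constant along $\gamma$ since $A$ is isoperimetric, and equals $(\log fh)'(r(t))\sin\alpha(t)+\alpha'(t)$. *)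

theory Defs
  imports "HOL-Analysis.Analysis"
begin

definition smooth_on :: "real set \<Rightarrow> (real \<Rightarrow> 'a::real_normed_vector) \<Rightarrow> bool" where
  "smooth_on S g \<longleftrightarrow>
     (\<exists>D :: nat \<Rightarrow> real \<Rightarrow> 'a. (\<forall>t\<in>S. D 0 t = g t) \<and>
        (\<forall>n. \<forall>t\<in>S. (D n has_vector_derivative D (Suc n) t) (at t within S)))"

end

theory Submission
  imports Defs
begin

lemma smooth_vd:
  fixes g :: "real \<Rightarrow> real"
  assumes "smooth_on {a..b} g" "a < b" "t \<in> {a..b}"
  shows "(g has_real_derivative vector_derivative g (at t within {a..b})) (at t within {a..b})"
proof -
  obtain D :: "nat \<Rightarrow> real \<Rightarrow> real" where D0: "\<forall>t\<in>{a..b}. D 0 t = g t"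
    and DS: "\<forall>n. \<forall>t\<in>{a..b}. (D n has_vector_derivative D (Suc n) t) (at t within {a..b})"
    using assms(1) unfolding smooth_on_def by blast
  have "(g has_vector_derivative D 1 t) (at t within {a..b})"
    using has_vector_derivative_transform[of t "{a..b}" g "D 0"] D0 DS assms(3) by simp
  moreover then have "vector_derivative g (at t within {a..b}) = D 1 t"
    using vector_derivative_within_closed_interval assms by blast
  ultimately show ?thesis by (simp add: has_real_derivative_iff_has_vector_derivative)
qed

lemma lip_g:
  fixes f h :: "real \<Rightarrow> real"
  assumes h_smooth: "smooth_on UNIV h"
    and h_pos: "\<forall>s>0. h s > 0"
    and f_smooth: "smooth_on {0..} f"
    and f_pos: "\<forall>s\<ge>0. f s > 0"
    and m: "0 < m"
  shows "\<exists>L\<ge>0. \<forall>x\<in>{m..M}. \<forall>y\<in>{m..M}.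
     \<bar>deriv (\<lambda>s. ln (f s * h s)) x - deriv (\<lambda>s. ln (f s * h s)) y\<bar> \<le> L * \<bar>x - y\<bar>"
proof -
  obtain Df :: "nat \<Rightarrow> real \<Rightarrow> real" where Df0: "\<forall>t\<in>{0..}. Df 0 t = f t"
    and DfS: "\<forall>n. \<forall>t\<in>{0..}. (Df n has_vector_derivative Df (Suc n) t) (at t within {0..})"
    using f_smooth unfolding smooth_on_def by blast
  obtain Dh :: "nat \<Rightarrow> real \<Rightarrow> real" where Dh0: "\<forall>t. Dh 0 t = h t"
    and DhS: "\<forall>n t. (Dh n has_vector_derivative Dh (Suc n) t) (at t)"
    using h_smooth unfolding smooth_on_def by auto
  have dF: "(Df n has_real_derivative Df (Suc n) s) (at s)" if "s > 0" for n s
  proof -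
    have "at s within {0..} = at s"
      using that by (intro at_within_interior) auto
    moreover have "(Df n has_vector_derivative Df (Suc n) s) (at s within {0..})"
      using DfS that by simp
    ultimately show ?thesis by (simp add: has_real_derivative_iff_has_vector_derivative)
  qed
  have dH: "(Dh n has_real_derivative Dh (Suc n) s) (at s)" for n s
    using DhS by (simp add: has_real_derivative_iff_has_vector_derivative)
  have cF: "continuous_on {m..M} (Df n)" for n
  proof (intro continuous_at_imp_continuous_on ballI)
    fix x assume "x \<in> {m..M}"
    then show "isCont (Df n) x" using dF[of x n] m by (intro DERIV_isCont) auto
  qed
  have cH: "continuous_on {m..M} (Dh n)" for n
    using dH by (intro continuous_at_imp_continuous_on ballI DERIV_isCont) (blast)
  define G where "G s = (Df 1 s * Dh 0 s + Df 0 s * Dh 1 s) / (Df 0 s * Dh 0 s)" for s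
  define G' where "G' s = (((Df 2 s * Dh 0 s + Dh 1 s * Df 1 s) + (Df 1 s * Dh 1 s + Dh 2 s * Df 0 s)) * (Df 0 s * Dh 0 s)
     - (Df 1 s * Dh 0 s + Df 0 s * Dh 1 s) * (Df 1 s * Dh 0 s + Dh 1 s * Df 0 s)) / ((Df 0 s * Dh 0 s) * (Df 0 s * Dh 0 s))" for s
  have pos: "Df 0 s > 0" "Dh 0 s > 0" if "s > 0" for s
    using that Df0 Dh0 f_pos h_pos by auto
  have gG: "deriv (\<lambda>s. ln (f s * h s)) s = G s" if "s > 0" for s
  proof -
    have "((\<lambda>s. ln (Df 0 s * Dh 0 s)) has_real_derivative G s) (at s)"
      unfolding G_def using pos[OF that] dF[OF that, of 0] dH[of 0 s]
      by (auto intro!: derivative_eq_intros simp: field_simps)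
    then have "((\<lambda>s. ln (f s * h s)) has_real_derivative G s) (at s)"
      by (rule has_field_derivative_transform_within_open[where S="{0<..}"])
         (use that Df0 Dh0 in auto)
    then show ?thesis by (rule DERIV_imp_deriv)
  qed
  have dG: "(G has_real_derivative G' s) (at s)" if "s > 0" for s
  proof -
    have "Df 0 s * Dh 0 s \<noteq> 0" using pos[OF that] by simp
    then show ?thesis
      unfolding G_def G'_def 
      by (intro DERIV_divide DERIV_add DERIV_mult)
         (simp_all add: numeral_2_eq_2 dF[OF that, of 0, simplified] dF[OF that, of 1, simplified] dH[of 0 s, simplified] dH[of 1 s, simplified])
  qed
  have "continuous_on {m..M} G'"
  proof -
    have nz: "\<forall>x\<in>{m..M}. Df 0 x * Dh 0 x * (Df 0 x * Dh 0 x) \<noteq> 0"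
    proof
      fix x assume "x \<in> {m..M}"
      then have "x > 0" using m by simp
      then show "Df 0 x * Dh 0 x * (Df 0 x * Dh 0 x) \<noteq> 0" using pos[of x] by simp
    qed
    show ?thesis unfolding G'_def
      by (intro continuous_intros cF cH) (use nz in blast)
  qed
  then have "bounded (G' ` {m..M})" by (intro compact_imp_bounded compact_continuous_image) auto
  then obtain B where B: "\<forall>x\<in>{m..M}. \<bar>G' x\<bar> \<le> B" unfolding bounded_iff by auto
  show ?thesis
  proof (intro exI[of _ "max B 0"] conjI ballI)
    fix x y assume xy: "x \<in> {m..M}" "y \<in> {m..M}"
    have "norm (G x - G y) \<le> max B 0 * norm (x - y)"
    proof (rule field_differentiable_bound[of "{m..M}"])
      fix z assume z: "z \<in> {m..M}"
      show "(G has_field_derivative G' z) (at z within {m..M})"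
        using dG[of z] z m by (auto intro: has_field_derivative_at_within)
      show "norm (G' z) \<le> max B 0" using B z by fastforce
    qed (use xy in auto)
    then show "\<bar>deriv (\<lambda>s. ln (f s * h s)) x - deriv (\<lambda>s. ln (f s * h s)) y\<bar> \<le> max B 0 * \<bar>x - y\<bar>"
      using gG xy m by simp
  qed simp
qed


lemma sin_lip: "\<bar>sin (a::real) - sin b\<bar> \<le> \<bar>a - b\<bar>"
proof -
  have "\<bar>sin a - sin b\<bar> = 2 * \<bar>sin ((a - b) / 2)\<bar> * \<bar>cos ((a + b) / 2)\<bar>"
    by (simp add: sin_diff_sin abs_mult)
  also have "\<dots> \<le> 2 * \<bar>(a - b) / 2\<bar> * 1"
    by (intro mult_mono abs_sin_x_le_abs_x) auto
  finally show ?thesis by simp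
qed

lemma cos_lip: "\<bar>cos (a::real) - cos b\<bar> \<le> \<bar>a - b\<bar>"
proof -
  have "\<bar>cos a - cos b\<bar> = 2 * \<bar>sin ((a + b) / 2)\<bar> * \<bar>sin ((b - a) / 2)\<bar>"
    by (simp add: cos_diff_cos abs_mult)
  also have "\<dots> \<le> 2 * 1 * \<bar>(b - a) / 2\<bar>"
    by (intro mult_mono abs_sin_x_le_abs_x) auto
  finally show ?thesis by simp
qed

theorem lemma5p1:
  fixes h f :: "real \<Rightarrow> real"
    and \<beta> :: real
    and \<gamma> :: "real \<Rightarrow> complex"
    and r \<theta> \<alpha> :: "real \<Rightarrow> real"
  assumes h_smooth: "smooth_on UNIV h"
    and h_pos: "\<forall>s>0. h s > 0"
    and f_smooth: "smooth_on {0..} f"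
    and f_pos: "\<forall>s\<ge>0. f s > 0"
    and \<beta>_pos: "\<beta> > 0"
    and \<gamma>_smooth: "smooth_on {-\<beta>..\<beta>} \<gamma>"
    and polar: "\<forall>t\<in>{-\<beta>..\<beta>}. r t > 0 \<and> \<gamma> t = complex_of_real (r t) * cis (\<theta> t)"
    and r_smooth: "smooth_on {-\<beta>..\<beta>} r"
    and \<theta>_smooth: "smooth_on {-\<beta>..\<beta>} \<theta>"
    and arclength: "\<forall>t\<in>{-\<beta>..\<beta>}.
        (vector_derivative r (at t within {-\<beta>..\<beta>}))\<^sup>2
        + (h (r t))\<^sup>2 * (vector_derivative \<theta> (at t within {-\<beta>..\<beta>}))\<^sup>2 = 1"
    and symm: "\<forall>t\<in>{-\<beta>..\<beta>}. \<gamma> (- t) = cnj (\<gamma> t)"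
    and on_axis: "Im (\<gamma> 0) = 0" "Im (\<gamma> \<beta>) = 0"
    and closed: "\<gamma> \<beta> = \<gamma> (- \<beta>)"
    and above: "\<forall>t\<in>{0<..<\<beta>}. Im (\<gamma> t) > 0"
    and below: "\<forall>t\<in>{-\<beta><..<0}. Im (\<gamma> t) < 0"
    and farthest: "\<forall>t\<in>{-\<beta>..\<beta>}. r t \<le> r 0"
    and \<alpha>_smooth: "smooth_on {-\<beta>..\<beta>} \<alpha>"
    and \<alpha>_init: "0 \<le> \<alpha> 0" "\<alpha> 0 < 2 * pi"
    and \<alpha>_angle: "\<forall>t\<in>{-\<beta>..\<beta>}.
        cos (\<alpha> t) = vector_derivative r (at t within {-\<beta>..\<beta>}) \<and>
        sin (\<alpha> t) = h (r t) * vector_derivative \<theta> (at t within {-\<beta>..\<beta>})"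
    and kappa_const: "\<exists>\<kappa>. \<forall>t\<in>{-\<beta>..\<beta>}.
        deriv (\<lambda>s. ln (f s * h s)) (r t) * sin (\<alpha> t)
        + vector_derivative \<alpha> (at t within {-\<beta>..\<beta>}) = \<kappa>"
    and \<alpha>'_zero: "vector_derivative \<alpha> (at 0 within {-\<beta>..\<beta>}) = 0"
  shows "\<exists>R>0. \<gamma> ` {-\<beta>..\<beta>} = sphere 0 R"
  proof -
  let ?I = "{-\<beta>..\<beta>}"
  define g where "g s = deriv (\<lambda>s. ln (f s * h s)) s" for s
  have bI: "-\<beta> < \<beta>" using \<beta>_pos by simp
  have I0: "0 \<in> ?I" using \<beta>_pos by simp
  define rd where "rd t = vector_derivative r (at t within ?I)" for t
  define ad where "ad t = vector_derivative \<alpha> (at t within ?I)" for t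
  define td where "td t = vector_derivative \<theta> (at t within ?I)" for t
  have dr: "(r has_real_derivative rd t) (at t within ?I)" if "t \<in> ?I" for t
    unfolding rd_def by (rule smooth_vd[OF r_smooth bI that])
  have da: "(\<alpha> has_real_derivative ad t) (at t within ?I)" if "t \<in> ?I" for t
    unfolding ad_def by (rule smooth_vd[OF \<alpha>_smooth bI that])
  have dt: "(\<theta> has_real_derivative td t) (at t within ?I)" if "t \<in> ?I" for t
    unfolding td_def by (rule smooth_vd[OF \<theta>_smooth bI that])
  have r_cont: "continuous_on ?I r"
  proof (unfold continuous_on_eq_continuous_within, intro ballI)
    fix x assume "x \<in> ?I"
    then show "continuous (at x within ?I) r" by (rule DERIV_continuous[OF dr])
  qed
  define r0 where "r0 = r 0"
  define a0 where "a0 = \<alpha> 0"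
  have r0pos: "r0 > 0" using polar I0 unfolding r0_def by blast
  have rd0: "rd 0 = 0"
  proof -
    have "(r has_real_derivative rd 0) (at 0)"
      using dr[OF I0] at_within_Icc_at[of "-\<beta>" 0 \<beta>] \<beta>_pos by simp
    then show ?thesis
      by (rule DERIV_local_max[where d=\<beta>]) (use farthest \<beta>_pos in \<open>auto simp: abs_less_iff\<close>)
  qed
  have cosa0: "cos a0 = 0" using \<alpha>_angle I0 rd0 unfolding a0_def rd_def by simp
  have sina0: "\<bar>sin a0\<bar> = 1"
  proof -
    have "(sin a0)\<^sup>2 = 1" using sin_cos_squared_add[of a0] cosa0 by simp
    then have "sin a0 = 1 \<or> sin a0 = -1" by (simp add: power2_eq_1_iff)
    then show ?thesis by auto
  qed
  obtain \<kappa> where \<kappa>: "\<forall>t\<in>?I. g (r t) * sin (\<alpha> t) + ad t = \<kappa>"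
    using kappa_const unfolding g_def ad_def by blast
  have adf: "ad t = g r0 * sin a0 - g (r t) * sin (\<alpha> t)" if "t \<in> ?I" for t
  proof -
    have "g (r 0) * sin (\<alpha> 0) + ad 0 = \<kappa>" using \<kappa> I0 by blast
    then have "\<kappa> = g r0 * sin a0" using \<alpha>'_zero unfolding ad_def r0_def a0_def by simp
    then show ?thesis using \<kappa> that by force
  qed
  obtain tm where tm: "tm \<in> ?I" "\<forall>t\<in>?I. r tm \<le> r t"
    using continuous_attains_inf[OF compact_Icc _ r_cont] bI by auto
  define m where "m = r tm"
  have mpos: "m > 0" using polar tm unfolding m_def by blast
  obtain L where L: "L \<ge> 0" "\<forall>x\<in>{m..r0}. \<forall>y\<in>{m..r0}. \<bar>g x - g y\<bar> \<le> L * \<bar>x - y\<bar>"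
    using lip_g[OF h_smooth h_pos f_smooth f_pos mpos, of r0] unfolding g_def by blast
  have rin: "r t \<in> {m..r0}" if "t \<in> ?I" for t
    using tm farthest that unfolding m_def r0_def by auto
  define C where "C = 1 + L + 2 * \<bar>g r0\<bar>"
  define E where "E t = (r t - r0)\<^sup>2 + (\<alpha> t - a0)\<^sup>2" for t
  define E' where "E' t = 2 * (r t - r0) * rd t + 2 * (\<alpha> t - a0) * ad t" for t
  have dE: "(E has_real_derivative E' t) (at t within ?I)" if "t \<in> ?I" for t
    unfolding E_def E'_def using dr[OF that] da[OF that]
    by (auto intro!: derivative_eq_intros simp: algebra_simps)
  have E_cont: "continuous_on ?I E"
  proof (unfold continuous_on_eq_continuous_within, intro ballI)
    fix x assume "x \<in> ?I"
    then show "continuous (at x within ?I) E" by (rule DERIV_continuous[OF dE])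
  qed
  have Enn: "E t \<ge> 0" for t unfolding E_def by simp
  have E0: "E 0 = 0" unfolding E_def r0_def a0_def by simp
  have bound: "\<bar>E' t\<bar> \<le> C * E t" if tI: "t \<in> ?I" for t
  proof -
    define x where "x = r t - r0"
    define y where "y = \<alpha> t - a0"
    have h1: "\<bar>rd t\<bar> \<le> \<bar>y\<bar>"
      using \<alpha>_angle tI cos_lip[of "\<alpha> t" a0] cosa0 unfolding rd_def y_def by simp
    have "\<bar>ad t\<bar> = \<bar>g r0 * (sin a0 - sin (\<alpha> t)) + (g r0 - g (r t)) * sin (\<alpha> t)\<bar>"
      using adf[OF tI] by (simp add: algebra_simps)
    also have "\<dots> \<le> \<bar>g r0\<bar> * \<bar>sin a0 - sin (\<alpha> t)\<bar> + \<bar>g r0 - g (r t)\<bar> * \<bar>sin (\<alpha> t)\<bar>"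
      by (metis abs_mult abs_triangle_ineq)
    also have "\<dots> \<le> \<bar>g r0\<bar> * \<bar>y\<bar> + (L * \<bar>x\<bar>) * 1"
    proof (intro add_mono mult_mono)
      show "\<bar>sin a0 - sin (\<alpha> t)\<bar> \<le> \<bar>y\<bar>"
        using sin_lip[of a0 "\<alpha> t"] unfolding y_def by (simp add: abs_minus_commute)
      have "r0 \<in> {m..r0}" using rin[OF I0] unfolding r0_def by simp
      then show "\<bar>g r0 - g (r t)\<bar> \<le> L * \<bar>x\<bar>"
        using L(2) rin[OF tI] unfolding x_def by (metis abs_minus_commute)
    qed (auto simp: L)
    finally have h2: "\<bar>ad t\<bar> \<le> \<bar>g r0\<bar> * \<bar>y\<bar> + L * \<bar>x\<bar>" by simp
    have "\<bar>E' t\<bar> \<le> 2 * \<bar>x\<bar> * \<bar>rd t\<bar> + 2 * \<bar>y\<bar> * \<bar>ad t\<bar>"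
      unfolding E'_def x_def y_def by (metis (no_types) abs_mult abs_numeral abs_triangle_ineq mult.assoc)
    also have "\<dots> \<le> 2 * \<bar>x\<bar> * \<bar>y\<bar> + 2 * \<bar>y\<bar> * (\<bar>g r0\<bar> * \<bar>y\<bar> + L * \<bar>x\<bar>)"
      by (intro add_mono mult_left_mono h1 h2) auto
    also have "\<dots> \<le> C * E t"
    proof -
      define X where "X = \<bar>x\<bar>"
      define Y where "Y = \<bar>y\<bar>"
      have E: "E t = X^2 + Y^2" unfolding E_def X_def Y_def x_def y_def by simp
      have id: "C * (X^2 + Y^2) - (2 * X * Y + 2 * Y * (\<bar>g r0\<bar> * Y + L * X))
          = (1 + L) * (X - Y)^2 + 2 * \<bar>g r0\<bar> * X^2"
        unfolding C_def by (simp add: algebra_simps power2_eq_square)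
      have "0 \<le> (1 + L) * (X - Y)^2 + 2 * \<bar>g r0\<bar> * X^2" using L(1) by simp
      then show ?thesis using id unfolding E X_def Y_def by linarith
    qed
    finally show ?thesis .
  qed
  have Cnn: "C \<ge> 0" unfolding C_def using L(1) by simp
  have Ezero: "E t = 0" if tI: "t \<in> ?I" for t
  proof (cases "t \<ge> 0")
    case True
    define F where "F s = E s * exp (- C * s)" for s
    have "F 0 \<ge> F t"
    proof (rule DERIV_nonpos_imp_decreasing_open[of 0 t F, OF True])
      fix x assume x: "0 < x" "x < t"
      then have xI: "-\<beta> < x" "x < \<beta>" using tI by auto
      have "(E has_real_derivative E' x) (at x)"
        using dE[of x] xI at_within_Icc_at[of "-\<beta>" x \<beta>] by simp
      then have "(F has_real_derivative (E' x - C * E x) * exp (- C * x)) (at x)"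
        unfolding F_def by (auto intro!: derivative_eq_intros simp: algebra_simps)
      moreover have "(E' x - C * E x) * exp (- C * x) \<le> 0"
        using bound[of x] xI by (intro mult_nonpos_nonneg) auto
      ultimately show "\<exists>y. (F has_real_derivative y) (at x) \<and> y \<le> 0" by blast
    next
      have "continuous_on {0..t} E" using E_cont by (rule continuous_on_subset) (use tI in auto)
      then show "continuous_on {0..t} F" unfolding F_def by (intro continuous_intros)
    qed
    then have "E t * exp (- C * t) \<le> 0" unfolding F_def using E0 by simp
    then show ?thesis using Enn[of t] by (simp add: mult_le_0_iff)
  next
    case False
    define F where "F s = E s * exp (C * s)" for s
    have "F t \<le> F 0"
    proof (rule DERIV_nonneg_imp_increasing_open[of t 0 F])
      show "t \<le> 0" using False by simp
      fix x assume x: "t < x" "x < 0"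
      then have xI: "-\<beta> < x" "x < \<beta>" using tI by auto
      have "(E has_real_derivative E' x) (at x)"
        using dE[of x] xI at_within_Icc_at[of "-\<beta>" x \<beta>] by simp
      then have "(F has_real_derivative (E' x + C * E x) * exp (C * x)) (at x)"
        unfolding F_def by (auto intro!: derivative_eq_intros simp: algebra_simps)
      moreover have "(E' x + C * E x) * exp (C * x) \<ge> 0"
        using bound[of x] xI by (intro mult_nonneg_nonneg) auto
      ultimately show "\<exists>y. (F has_real_derivative y) (at x) \<and> y \<ge> 0" by blast
    next
      have "continuous_on {t..0} E" using E_cont by (rule continuous_on_subset) (use tI in auto)
      then show "continuous_on {t..0} F" unfolding F_def by (intro continuous_intros)
    qed
    then have "E t * exp (C * t) \<le> 0" unfolding F_def using E0 by simp
    then show ?thesis using Enn[of t] by (simp add: mult_le_0_iff)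
  qed
  have rconst: "r t = r0" and aconst: "\<alpha> t = a0" if "t \<in> ?I" for t
    using Ezero[OF that] unfolding E_def by (simp_all add: add_nonneg_eq_0_iff)
  have hr0: "h r0 > 0" using h_pos r0pos by simp
  define c where "c = sin a0 / h r0"
  have cnz: "c \<noteq> 0" using sina0 hr0 unfolding c_def by auto
  have tdc: "td t = c" if "t \<in> ?I" for t
    using \<alpha>_angle that rconst[OF that] aconst[OF that] hr0 unfolding td_def c_def by auto
  obtain k where k: "\<forall>t\<in>?I. \<theta> t - c * t = k"
  proof -
    have "\<exists>k. \<forall>t\<in>?I. \<theta> t - c * t = k"
    proof (rule has_field_derivative_zero_constant)
      fix t assume "t \<in> ?I"
      then show "((\<lambda>t. \<theta> t - c * t) has_field_derivative 0) (at t within ?I)"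
        using dt[of t] tdc[of t] by (auto intro!: derivative_eq_intros)
    qed simp
    then show ?thesis using that by blast
  qed
  define th0 where "th0 = \<theta> 0"
  have thf: "\<theta> t = th0 + c * t" if "t \<in> ?I" for t
  proof -
    have "\<theta> t - c * t = k" "\<theta> 0 - c * 0 = k" using k that I0 by blast+
    then show ?thesis unfolding th0_def by simp
  qed
  have gam: "\<gamma> t = complex_of_real r0 * cis (th0 + c * t)" if "t \<in> ?I" for t
    using polar that rconst[OF that] thf[OF that] by simp
  have bI': "\<beta> \<in> ?I" "-\<beta> \<in> ?I" using \<beta>_pos by auto
  have "cis (th0 + c * \<beta>) = cis (th0 + c * (-\<beta>))"
    using closed gam[OF bI'(1)] gam[OF bI'(2)] r0pos by simp
  then have "cis (th0 + c * \<beta>) / cis (th0 + c * (-\<beta>)) = 1" by simp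
  then have "cis (2 * c * \<beta>) = 1" by (simp add: cis_divide algebra_simps)
  then have "cos (2 * c * \<beta>) = 1" by (metis cis.sel(1) one_complex.simps(1))
  then obtain n :: int where n: "2 * c * \<beta> = real_of_int n * 2 * pi" using cos_one_2pi_int by blast
  have "n \<noteq> 0" using n cnz \<beta>_pos by auto
  then have "\<bar>real_of_int n\<bar> \<ge> 1" by linarith
  have cb: "\<bar>c\<bar> * \<beta> = \<bar>real_of_int n\<bar> * pi"
  proof -
    have "\<bar>c * \<beta>\<bar> = \<bar>real_of_int n * pi\<bar>" using n by (simp add: algebra_simps)
    then show ?thesis using \<beta>_pos by (simp add: abs_mult)
  qed
  have cbpi: "\<bar>c\<bar> * \<beta> \<ge> pi" using cb \<open>\<bar>real_of_int n\<bar> \<ge> 1\<close> by simp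
  show ?thesis
  proof (intro exI[of _ r0] conjI r0pos)
    show "\<gamma> ` ?I = sphere 0 r0"
    proof
      show "\<gamma> ` ?I \<subseteq> sphere 0 r0"
        using gam r0pos by (auto simp: norm_mult)
    next
      show "sphere 0 r0 \<subseteq> \<gamma> ` ?I"
      proof
        fix z :: complex assume "z \<in> sphere 0 r0"
        then have nz: "norm z = r0" by simp
        define w where "w = z / cis th0"
        have nw: "cmod w = r0" unfolding w_def using nz by (simp add: norm_divide)
        define t where "t = Arg w / c"
        have "\<bar>t\<bar> = \<bar>Arg w\<bar> / \<bar>c\<bar>" unfolding t_def by (simp add: abs_divide)
        also have "\<dots> \<le> pi / \<bar>c\<bar>"
          using Arg_bounded[of w] cnz by (intro divide_right_mono) auto
        also have "\<dots> \<le> \<beta>" using cbpi cnz by (simp add: divide_le_eq mult.commute)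
        finally have tI: "t \<in> ?I" by auto
        have "\<gamma> t = complex_of_real r0 * cis (th0 + Arg w)"
          using gam[OF tI] cnz unfolding t_def by simp
        also have "\<dots> = cis th0 * rcis (cmod w) (Arg w)"
          using nw by (simp add: rcis_def cis_mult[symmetric])
        also have "\<dots> = z" unfolding rcis_cmod_Arg w_def by simp
        finally show "z \<in> \<gamma> ` ?I" using tI by (metis image_eqI)
      qed
    qed
  qed
qed

end
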